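(* The intersection of all members' viability kernels is not necessarily a viable set for all members. Precisely: there exist $N\ge 2$, a closed constraint set $K\subset\mathbb R^n$, an admissible control set $U$ and continuous-time dynamics $x'=f_i(x,u)$, $u\in U$, $i=1,\dots,N$, such that the intersection $H=\bigcap_{i=1}^N \mathrm{Viab}_i(K)$ is nonempty but $H$ is not a viable set for some member $i$'s system.
   Context: $\mathrm{Viab}_i(K)$ denotes the viability kernel of $K$ for member $i$'s system $x'(t)=f_i(x(t),u(t))$, $u(t)\in U(x(t))$: the set of all $x\in K$ from which there exists an evolution of the system starting at $x$ whose trajectory remains in $K$ for all $t\ge0$. A set $H$ is viable for a system if from every $x\in H$ there exists an evolution of that system starting at $x$ remaining in $H$ for all $t\ge0$. *)

theory Defs
  imports "HOL-Analysis.Analysis"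
begin

text \<open>An evolution of the controlled system x'(t) = f(x(t),u(t)), u(t) in U(x(t)),
  starting at x0: an absolutely continuous (Caratheodory) solution on [0,oo), i.e.
  x(t) = x0 + integral over [0,t] of f(x(s),u(s)) ds with an absolutely integrable integrand,
  for some control u with u(t) in U(x(t)) for all t >= 0.\<close>
definition evolution ::
  "('a::euclidean_space \<Rightarrow> 'c \<Rightarrow> 'a) \<Rightarrow> ('a \<Rightarrow> 'c set) \<Rightarrow> 'a \<Rightarrow> (real \<Rightarrow> 'a) \<Rightarrow> bool" where
  "evolution f U x0 x \<longleftrightarrow> x 0 = x0 \<and>
     (\<exists>u::real \<Rightarrow> 'c. (\<forall>t\<ge>0. u t \<in> U (x t)) \<and>
        (\<forall>t\<ge>0. (\<lambda>s. f (x s) (u s)) absolutely_integrable_on {0..t} \<and>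
                ((\<lambda>s. f (x s) (u s)) has_integral (x t - x0)) {0..t}))"

definition viab ::
  "('a::euclidean_space \<Rightarrow> 'c \<Rightarrow> 'a) \<Rightarrow> ('a \<Rightarrow> 'c set) \<Rightarrow> 'a set \<Rightarrow> 'a set" where
  "viab f U K = {x \<in> K. \<exists>\<xi>. evolution f U x \<xi> \<and> (\<forall>t\<ge>0. \<xi> t \<in> K)}"

definition viable_set ::
  "('a::euclidean_space \<Rightarrow> 'c \<Rightarrow> 'a) \<Rightarrow> ('a \<Rightarrow> 'c set) \<Rightarrow> 'a set \<Rightarrow> bool" where
  "viable_set f U H \<longleftrightarrow> (\<forall>x\<in>H. \<exists>\<xi>. evolution f U x \<xi> \<and> (\<forall>t\<ge>0. \<xi> t \<in> H))"

end

theory Submission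
  imports Defs
begin

lemma evol_const:
  assumes "evolution (\<lambda>x u. v) U x0 \<xi>" "t \<ge> 0"
  shows "\<xi> t = x0 + t *\<^sub>R v"
proof -
  from assms(1) have "((\<lambda>s. v) has_integral (\<xi> t - x0)) {0..t}"
    using assms(2) unfolding evolution_def by auto
  moreover have "((\<lambda>s. v) has_integral (t *\<^sub>R v)) {0..t}"
    using has_integral_const_real[of v 0 t] assms(2) by simp
  ultimately have "\<xi> t - x0 = t *\<^sub>R v" by (rule has_integral_unique)
  then show ?thesis using assms(2) by (simp add: algebra_simps)
qed

lemma evol_const_ex:
  assumes "U x0' \<noteq> {}" "\<And>x. U x = U x0'"
  shows "evolution (\<lambda>x u. v) U x0 (\<lambda>t. x0 + t *\<^sub>R v)"
proof -
  obtain c where c: "c \<in> U x0'" using assms(1) by auto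
  show ?thesis unfolding evolution_def
  proof (intro conjI exI[of _ "\<lambda>_. c"] allI impI)
    fix t :: real assume "t \<ge> 0"
    show "(\<lambda>s. v) absolutely_integrable_on {0..t}" by simp
    have "((\<lambda>s. v) has_integral (t *\<^sub>R v)) {0..t}"
      using has_integral_const_real[of v 0 t] \<open>t \<ge> 0\<close> by simp
    then show "((\<lambda>s. v) has_integral (x0 + t *\<^sub>R v - x0)) {0..t}"
      using \<open>t \<ge> 0\<close> by simp
  qed (use c assms in auto)
qed

theorem proposition2:
  shows "\<exists>(N::nat) (K::(real^2) set) (U::real^2 \<Rightarrow> (real^2) set)
            (f::nat \<Rightarrow> real^2 \<Rightarrow> real^2 \<Rightarrow> real^2).
           N \<ge> 2 \<and> closed K \<and> (\<forall>x. U x \<noteq> {}) \<and>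
           (\<Inter>i\<in>{1..N}. viab (f i) U K) \<noteq> {} \<and>
           (\<exists>i\<in>{1..N}. \<not> viable_set (f i) U (\<Inter>j\<in>{1..N}. viab (f j) U K))"
proof -
  define e1 :: "real^2" where "e1 = axis 1 1"
  define e2 :: "real^2" where "e2 = axis 2 1"
  define K :: "(real^2) set" where "K = {x. x$1 \<le> 0} \<union> {x. x$2 \<le> 0}"
  define U :: "real^2 \<Rightarrow> (real^2) set" where "U = (\<lambda>_. {0})"
  define f :: "nat \<Rightarrow> real^2 \<Rightarrow> real^2 \<Rightarrow> real^2" where
    "f = (\<lambda>i x u. if i = 1 then e1 else e2)"
  have f1: "f 1 = (\<lambda>x u. e1)" and f2: "f 2 = (\<lambda>x u. e2)" by (auto simp: f_def)
  have cl: "closed K" unfolding K_def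
    by (intro closed_Un closed_halfspace_component_le_cart)
  have e1c: "e1$1 = 1" "e1$2 = 0" and e2c: "e2$1 = 0" "e2$2 = 1"
    by (auto simp: e1_def e2_def axis_def)
  have UU: "U x \<noteq> {}" "U x = U 0" for x by (auto simp: U_def)
  have z1: "0 \<in> viab (f 1) U K"
    unfolding viab_def f1
    apply (intro CollectI conjI exI[of _ "\<lambda>t. 0 + t *\<^sub>R e1"])
      apply (simp add: K_def)
     apply (rule evol_const_ex[of U 0, OF UU(1) UU(2)])
    by (auto simp: K_def e1c)
  have z2: "0 \<in> viab (f 2) U K"
    unfolding viab_def f2
    apply (intro CollectI conjI exI[of _ "\<lambda>t. 0 + t *\<^sub>R e2"])
      apply (simp add: K_def)
     apply (rule evol_const_ex[of U 0, OF UU(1) UU(2)])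
    by (auto simp: K_def e2c)
  have Hset: "(\<Inter>i\<in>{1..2::nat}. viab (f i) U K) = viab (f 1) U K \<inter> viab (f 2) U K"
  proof -
    have "{1..2::nat} = {1,2}" by auto
    then show ?thesis by simp
  qed
  have n2: "e1 \<notin> viab (f 2) U K"
  proof
    assume "e1 \<in> viab (f 2) U K"
    then obtain \<xi> where ev: "evolution (\<lambda>x u. e2) U e1 \<xi>" and inK: "\<forall>t\<ge>0. \<xi> t \<in> K"
      unfolding viab_def f2 by auto
    have "\<xi> 1 = e1 + e2" using evol_const[OF ev] by simp
    moreover have "\<xi> 1 \<in> K" using inK by simp
    ultimately show False by (simp add: K_def e1c e2c)
  qed
  have nv: "\<not> viable_set (f 1) U (\<Inter>j\<in>{1..2}. viab (f j) U K)"
  proof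
    assume "viable_set (f 1) U (\<Inter>j\<in>{1..2}. viab (f j) U K)"
    then have vs: "viable_set (\<lambda>x u. e1) U (viab (f 1) U K \<inter> viab (f 2) U K)"
      unfolding Hset f1 .
    have "0 \<in> viab (f 1) U K \<inter> viab (f 2) U K" using z1 z2 by simp
    with vs obtain \<xi> where ev: "evolution (\<lambda>x u. e1) U 0 \<xi>"
      and inH: "\<forall>t\<ge>0. \<xi> t \<in> viab (f 1) U K \<inter> viab (f 2) U K"
      unfolding viable_set_def by blast
    have "\<xi> 1 = e1" using evol_const[OF ev] by simp
    moreover have "\<xi> 1 \<in> viab (f 2) U K" using inH by simp
    ultimately show False using n2 by simp
  qed
  show ?thesis
  proof (intro exI conjI)
    show "(2::nat) \<le> 2" by simp
    show "closed K" by (rule cl)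
    show "\<forall>x. U x \<noteq> {}" using UU by blast
    show "(\<Inter>i\<in>{1..2}. viab (f i) U K) \<noteq> {}" unfolding Hset using z1 z2 by blast
    show "\<exists>i\<in>{1..2::nat}. \<not> viable_set (f i) U (\<Inter>j\<in>{1..2}. viab (f j) U K)"
      using nv by (intro bexI[of _ 1]) auto
  qed
qed

end
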